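(* Let $d=|d|e^{i\theta}\in\mathbb{C}\setminus\{0\}$, $\xi\in\mathbb{C}$, $w_m=d(m+\xi)$ for $m=1,2,\dots$, and let $(\delta\omega_m)_{m\ge1}$ be complex numbers with $\delta\omega_m=O(m^{-\epsilon})$ for some $\epsilon>0$. Define $$\Delta(\omega)=\sum_{m=1}^{\infty}\left(\frac{1}{\omega-w_m}-\frac{1}{\omega-w_m-\delta\omega_m}\right).$$ Then for every $\varphi\in\mathbb{R}$ with $\varphi\not\equiv\theta\pmod{2\pi}$, the series converges for all sufficiently large $|\omega|$ on the ray $\arg\omega=\varphi$, and $$\lim_{r\to\infty} r\,\Delta(re^{i\varphi})=0.$$ *)

theory Defs
  imports "HOL-Analysis.Analysis" "HOL-Library.Landau_Symbols"
begin

definition wpt :: "complex \<Rightarrow> complex \<Rightarrow> nat \<Rightarrow> complex" where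
  "wpt d \<xi> m = d * (of_nat m + \<xi>)"

definition Delta_term :: "complex \<Rightarrow> complex \<Rightarrow> (nat \<Rightarrow> complex) \<Rightarrow> complex \<Rightarrow> nat \<Rightarrow> complex" where
  "Delta_term d \<xi> dw \<omega> m =
     1 / (\<omega> - wpt d \<xi> m) - 1 / (\<omega> - wpt d \<xi> m - dw m)"

definition Delta :: "complex \<Rightarrow> complex \<Rightarrow> (nat \<Rightarrow> complex) \<Rightarrow> complex \<Rightarrow> complex" where
  "Delta d \<xi> dw \<omega> = (\<Sum>m. Delta_term d \<xi> dw \<omega> (Suc m))"

end

theory Submission
  imports Defs
begin

lemma geo:
  fixes r s \<psi> :: real
  assumes "cos \<psi> < 1" "r \<ge> 0" "s \<ge> 0"
  shows "sqrt ((1 - cos \<psi>)/2) * (r+s) \<le> cmod (of_real r * cis \<psi> - of_real s)"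
proof -
  have e: "cmod (of_real r * cis \<psi> - of_real s) = sqrt ((r * cos \<psi> - s)^2 + (r * sin \<psi>)^2)"
    by (simp add: cmod_def)
  have q: "(r * cos \<psi> - s)^2 + (r * sin \<psi>)^2 = r^2 - 2 * r * s * cos \<psi> + s^2"
    using sin_cos_squared_add[of \<psi>] by algebra
  have "(1 - cos \<psi>)/2 * (r+s)^2 \<le> r^2 - 2 * r * s * cos \<psi> + s^2"
  proof -
    have "r^2 - 2 * r * s * cos \<psi> + s^2 - (1 - cos \<psi>)/2 * (r+s)^2 = (1 + cos \<psi>)/2 * (r-s)^2"
      by (simp add: power2_eq_square field_simps)
    moreover have "(1 + cos \<psi>)/2 * (r-s)^2 \<ge> 0" proof -
      have "0 \<le> 1 + cos \<psi>" using cos_ge_minus_one[of \<psi>] by linarith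
      thus ?thesis by simp
    qed
    ultimately show ?thesis by linarith
  qed
  hence "sqrt ((1 - cos \<psi>)/2 * (r+s)^2) \<le> cmod (of_real r * cis \<psi> - of_real s)"
    unfolding e q by (rule real_sqrt_le_mono)
  moreover have "sqrt ((1 - cos \<psi>)/2 * (r+s)^2) = sqrt ((1 - cos \<psi>)/2) * (r+s)"
    using assms by (simp only: real_sqrt_mult real_sqrt_abs abs_of_nonneg add_nonneg_nonneg)
  ultimately show ?thesis by simp
qed

lemma term_eq:
  fixes a \<delta> :: complex
  assumes "a \<noteq> 0" "a - \<delta> \<noteq> 0"
  shows "1/a - 1/(a - \<delta>) = - \<delta> / (a * (a - \<delta>))"
  using assms by (simp add: field_simps)


lemma aux:
  fixes P r s c X :: real
  assumes "P \<ge> 4 * r * s" "r > 0" "s > 0" "c > 0" "X \<ge> 0"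
  shows "r * (4 * X / (c^2 * P)) \<le> X / (c^2 * s)"
proof -
  have P: "P > 0" using assms by (smt (verit) mult_pos_pos)
  have "r * (4 * X / (c^2 * P)) = (X * c^2) * (4 * r * s) / ((c^2 * s) * (c^2 * P))"
    using assms P by (simp add: field_simps power2_eq_square)
  also have "\<dots> \<le> (X * c^2) * P / ((c^2 * s) * (c^2 * P))"
    using assms P by (intro divide_right_mono mult_left_mono) auto
  also have "\<dots> = X / (c^2 * s)" using assms P by (simp add: field_simps power2_eq_square)
  finally show ?thesis .
qed

lemma key_bound:
  fixes d \<xi> :: complex and dw :: "nat \<Rightarrow> complex" and c B r \<theta> \<phi> :: real
  assumes d: "d = of_real (cmod d) * cis \<theta>" and cpos: "c > 0"
   and geo: "\<And>r s. r \<ge> 0 \<Longrightarrow> s \<ge> 0 \<Longrightarrow> c * (r+s) \<le> cmod (of_real r * cis (\<phi>-\<theta>) - of_real s)"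
   and B: "\<And>m. cmod (dw m) \<le> B"
   and r: "r \<ge> 2*(cmod (d*\<xi>) + B)/c" "r > 0"
  shows "cmod (Delta_term d \<xi> dw (of_real r * cis \<phi>) m) \<le> 4 * cmod (dw m) / (c^2 * (r + cmod d * real m)^2)"
proof -
  define s where "s = cmod d * real m"
  define A where "A = cmod (d*\<xi>)"
  define a where "a = of_real r * cis \<phi> - wpt d \<xi> m"
  have B0: "B \<ge> 0" using B[of 0] norm_ge_zero[of "dw 0"] by linarith
  have s0: "s \<ge> 0" unfolding s_def by simp
  have "a = cis \<theta> * (of_real r * cis (\<phi>-\<theta>) - of_real s) - d*\<xi>"
  proof -
    have "wpt d \<xi> m = of_real (cmod d) * cis \<theta> * of_nat m + d * \<xi>"
    proof -
      have "wpt d \<xi> m = d * of_nat m + d * \<xi>" by (simp add: wpt_def algebra_simps)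
      moreover have "d * of_nat m = of_real (cmod d) * cis \<theta> * of_nat m" by (metis d)
      ultimately show ?thesis by simp
    qed
    moreover have "cis \<theta> * cis (\<phi>-\<theta>) = cis \<phi>" by (simp add: cis_mult)
    ultimately show ?thesis unfolding a_def s_def
      by (simp add: algebra_simps)
  qed
  hence "cmod a \<ge> cmod (of_real r * cis (\<phi>-\<theta>) - of_real s) - A"
    unfolding A_def using norm_triangle_ineq2[of "cis \<theta> * (of_real r * cis (\<phi>-\<theta>) - of_real s)" "d*\<xi>"]
    by (simp add: norm_mult)
  hence a1: "cmod a \<ge> c * (r+s) - A" using geo[of r s] r s0 by linarith
  have crs: "c * (r+s) \<ge> 2*(A+B)"
  proof -
    have "c * r \<ge> 2*(A+B)" using r cpos unfolding A_def by (simp add: field_simps)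
    moreover have "c * s \<ge> 0" using cpos s0 by simp
    ultimately show ?thesis by (simp add: algebra_simps)
  qed
  define L where "L = c * (r+s)/2"
  have L0: "L > 0" unfolding L_def using cpos r s0 by simp
  have L2: "c * (r+s) = 2*L" unfolding L_def by simp
  have aL: "cmod a \<ge> L" using a1 crs B0 unfolding L2 by (smt (verit))
  have "cmod (a - dw m) \<ge> cmod a - cmod (dw m)" by (rule norm_triangle_ineq2)
  hence adL: "cmod (a - dw m) \<ge> L" using a1 crs B[of m] unfolding L2 by (smt (verit))
  have an: "a \<noteq> 0" using aL L0 by auto
  have adn: "a - dw m \<noteq> 0" using adL L0 by auto
  have "Delta_term d \<xi> dw (of_real r * cis \<phi>) m = - dw m / (a * (a - dw m))"
    unfolding Delta_term_def a_def[symmetric] using an adn by (simp add: field_simps)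
  hence "cmod (Delta_term d \<xi> dw (of_real r * cis \<phi>) m) = cmod (dw m) / (cmod a * cmod (a - dw m))"
    by (simp add: norm_mult norm_divide)
  also have "\<dots> \<le> cmod (dw m) / (L * L)"
    by (intro divide_left_mono mult_mono mult_pos_pos) (use aL adL L0 in auto)
  also have "\<dots> = 4 * cmod (dw m) / (c^2 * (r + cmod d * real m)^2)"
    unfolding L_def s_def by (simp add: power2_eq_square field_simps)
  finally show ?thesis .
qed


theorem mainTheorem7:
  fixes d \<xi> :: complex and dw :: "nat \<Rightarrow> complex" and \<epsilon> \<theta> \<phi> :: real
  assumes "d \<noteq> 0"
    and "d = of_real (cmod d) * cis \<theta>"
    and "\<epsilon> > 0"
    and "(\<lambda>m. cmod (dw m)) \<in> O(\<lambda>m. real m powr (- \<epsilon>))"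
    and "\<forall>k::int. \<phi> \<noteq> \<theta> + 2 * pi * of_int k"
  shows "(\<forall>\<^sub>F r in at_top. summable (\<lambda>m. Delta_term d \<xi> dw (of_real r * cis \<phi>) (Suc m)))
         \<and> ((\<lambda>r. of_real r * Delta d \<xi> dw (of_real r * cis \<phi>)) \<longlongrightarrow> 0) at_top"
proof -
  note d0 = assms(1) and d = assms(2) and eps = assms(3) and bo = assms(4) and ph = assms(5)
  have cos1: "cos (\<phi> - \<theta>) < 1"
  proof -
    have "cos (\<phi> - \<theta>) \<noteq> 1"
    proof
      assume "cos (\<phi> - \<theta>) = 1"
      then obtain n :: int where "\<phi> - \<theta> = real_of_int n * 2 * pi" using cos_one_2pi_int by metis
      hence "\<phi> = \<theta> + 2 * pi * of_int n" by (simp add: algebra_simps)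
      thus False using ph by blast
    qed
    thus ?thesis using cos_le_one[of "\<phi> - \<theta>"] by linarith
  qed
  define c where "c = sqrt ((1 - cos (\<phi> - \<theta>))/2)"
  have cpos: "c > 0" unfolding c_def using cos1 by simp
  have geo': "\<And>r s. r \<ge> 0 \<Longrightarrow> s \<ge> 0 \<Longrightarrow> c * (r+s) \<le> cmod (of_real r * cis (\<phi>-\<theta>) - of_real s)"
    unfolding c_def using geo[OF cos1] by blast
  obtain C where Cpos: "C > 0" and Cev: "eventually (\<lambda>m. norm (cmod (dw m)) \<le> C * norm (real m powr (- \<epsilon>))) at_top"
    using landau_o.bigE[OF bo] by blast
  have Cev': "eventually (\<lambda>m. cmod (dw m) \<le> C * real m powr (- \<epsilon>)) at_top"
    using Cev by simp
  have pw0: "(\<lambda>m. real m powr (- \<epsilon>)) \<longlonglongrightarrow> 0"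
    by (rule tendsto_neg_powr) (use eps filterlim_real_sequentially in auto)
  have dw0: "dw \<longlonglongrightarrow> 0"
    by (rule Lim_null_comparison[OF Cev' tendsto_mult_right_zero[OF pw0]])
  obtain B where Bpos: "B > 0" and B: "\<And>m. cmod (dw m) \<le> B"
    using BseqE[OF convergent_imp_Bseq[OF convergentI[OF dw0]]] by blast
  define A where "A = cmod (d*\<xi>)"
  define R0 where "R0 = 2*(A + B)/c + 1"
  have R0pos: "R0 > 0" unfolding R0_def A_def using Bpos cpos norm_ge_zero[of "d*\<xi>"] by (simp add: field_simps add_pos_nonneg)
  have kb: "\<And>r m. r \<ge> R0 \<Longrightarrow> cmod (Delta_term d \<xi> dw (of_real r * cis \<phi>) m) \<le> 4 * cmod (dw m) / (c^2 * (r + cmod d * real m)^2)"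
  proof -
    fix r m assume r: "r \<ge> R0"
    show "cmod (Delta_term d \<xi> dw (of_real r * cis \<phi>) m) \<le> 4 * cmod (dw m) / (c^2 * (r + cmod d * real m)^2)"
      by (rule key_bound[OF d cpos geo' B]) (use r R0pos in \<open>auto simp: R0_def A_def\<close>)
  qed
  define a where "a = (\<lambda>k r. of_real r * Delta_term d \<xi> dw (of_real r * cis \<phi>) (Suc k))"
  define M where "M = (\<lambda>k. cmod (dw (Suc k)) / (c^2 * cmod d * real (Suc k)))"
  have dpos: "cmod d > 0" using d0 by simp
  have bound1: "norm (a k r) \<le> M k" if r: "r \<ge> R0" for k r
  proof -
    define s where "s = cmod d * real (Suc k)"
    have s0: "s > 0" unfolding s_def using dpos by simp
    have r0: "r > 0" using r R0pos by linarith
    have "norm (a k r) = r * cmod (Delta_term d \<xi> dw (of_real r * cis \<phi>) (Suc k))"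
      unfolding a_def using r0 by (simp add: norm_mult)
    also have "\<dots> \<le> r * (4 * cmod (dw (Suc k)) / (c^2 * (r + s)^2))"
      unfolding s_def using kb[OF r, of "Suc k"] r0 by (intro mult_left_mono) auto
    also have "\<dots> \<le> cmod (dw (Suc k)) / (c^2 * s)"
    proof (rule aux)
      show "4 * r * s \<le> (r + s)^2" using sum_squares_ge_zero[of "r - s" 0]
        by (simp add: power2_eq_square algebra_simps)
    qed (use s0 r0 cpos in auto)
    also have "\<dots> = M k" unfolding M_def s_def by (simp add: mult.assoc)
    finally show ?thesis .
  qed
  have summM: "summable M"
  proof (rule summable_comparison_test_ev)
    have sp: "summable (\<lambda>k. real (Suc k) powr (-1 - \<epsilon>))"
      using summable_Suc_iff[of "\<lambda>n. real n powr (-1 - \<epsilon>)"] summable_real_powr_iff[of "-1 - \<epsilon>"] eps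
      by simp
    show "summable (\<lambda>k. C / (c^2 * cmod d) * real (Suc k) powr (-1 - \<epsilon>))"
      by (rule summable_mult[OF sp])
    have "eventually (\<lambda>k. cmod (dw (Suc k)) \<le> C * real (Suc k) powr (- \<epsilon>)) at_top"
      by (rule iffD2[OF eventually_sequentially_Suc[where P="\<lambda>m. cmod (dw m) \<le> C * real m powr (- \<epsilon>)"] Cev'])
    thus "eventually (\<lambda>k. norm (M k) \<le> C / (c^2 * cmod d) * real (Suc k) powr (-1 - \<epsilon>)) at_top"
    proof eventually_elim
      case (elim k)
      have e: "real (Suc k) powr (-1 - \<epsilon>) = real (Suc k) powr (- \<epsilon>) / real (Suc k)"
        using powr_add[of "real (Suc k)" "-1" "-\<epsilon>"] by (simp add: powr_neg_one)
      have "norm (M k) = cmod (dw (Suc k)) / (c^2 * cmod d * real (Suc k))"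
        unfolding M_def by simp
      also have "\<dots> \<le> C * real (Suc k) powr (- \<epsilon>) / (c^2 * cmod d * real (Suc k))"
        using elim cpos dpos by (intro divide_right_mono) auto
      also have "\<dots> = C / (c^2 * cmod d) * real (Suc k) powr (-1 - \<epsilon>)"
        unfolding e by simp
      finally show ?case .
    qed
  qed
  have lim: "((\<lambda>r. a k r) \<longlongrightarrow> 0) at_top" for k
  proof (rule Lim_null_comparison)
    show "((\<lambda>r. 4 * B / c^2 / r) \<longlongrightarrow> 0) at_top"
      by (rule tendsto_divide_0[OF tendsto_const filterlim_at_top_imp_at_infinity[OF filterlim_ident]])
    show "eventually (\<lambda>r. norm (a k r) \<le> 4 * B / c^2 / r) at_top"
      using eventually_ge_at_top[of R0]
    proof eventually_elim
      case (elim r)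
      have r0: "r > 0" using elim R0pos by linarith
      have "norm (a k r) = r * cmod (Delta_term d \<xi> dw (of_real r * cis \<phi>) (Suc k))"
        unfolding a_def using r0 by (simp add: norm_mult)
      also have "\<dots> \<le> r * (4 * cmod (dw (Suc k)) / (c^2 * (r + cmod d * real (Suc k))^2))"
        using kb[OF elim, of "Suc k"] r0 by (intro mult_left_mono) auto
      also have "\<dots> \<le> r * (4 * B / (c^2 * r^2))"
      proof (intro mult_left_mono frac_le)
        show "r^2 \<le> (r + cmod d * real (Suc k))^2" using r0 by (intro power_mono) auto
      qed (use B[of "Suc k"] Bpos r0 cpos in auto)
      also have "\<dots> = 4 * B / c^2 / r" using r0 by (simp add: field_simps power2_eq_square)
      finally show ?case .
    qed
  qed
  have bound: "eventually (\<lambda>(k,r). norm (a k r) \<le> M k) (at_top \<times>\<^sub>F at_top)"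
    unfolding eventually_prod_filter
    by (rule exI[of _ "\<lambda>_. True"], rule exI[of _ "\<lambda>r. r \<ge> R0"]) (auto intro: bound1)
  have T: "eventually (\<lambda>r. summable (\<lambda>k. norm (a k r))) at_top \<and>
           summable (\<lambda>n. norm ((\<lambda>_. 0::complex) n)) \<and>
           ((\<lambda>r. suminf (\<lambda>k. a k r)) \<longlongrightarrow> suminf (\<lambda>_. 0::complex)) at_top"
    by (rule tannerys_theorem[OF lim bound summM]) simp
  have ev: "eventually (\<lambda>r. summable (\<lambda>m. Delta_term d \<xi> dw (of_real r * cis \<phi>) (Suc m))) at_top"
    using conjunct1[OF T] eventually_gt_at_top[of 0]
  proof eventually_elim
    case (elim r)
    have "summable (\<lambda>k. of_real (1/r) * a k r)"
      using summable_mult[OF summable_norm_cancel[OF elim(1)]] by blast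
    moreover have "(\<lambda>k. of_real (1/r) * a k r) = (\<lambda>m. Delta_term d \<xi> dw (of_real r * cis \<phi>) (Suc m))"
      using elim(2) by (auto simp: a_def field_simps)
    ultimately show ?case by (simp only:)
  qed
  moreover have "((\<lambda>r. of_real r * Delta d \<xi> dw (of_real r * cis \<phi>)) \<longlongrightarrow> 0) at_top"
  proof -
    have "eventually (\<lambda>r. suminf (\<lambda>k. a k r) = of_real r * Delta d \<xi> dw (of_real r * cis \<phi>)) at_top"
      using ev
    proof eventually_elim
      case (elim r)
      show ?case unfolding a_def Delta_def by (rule suminf_mult[OF elim])
    qed
    thus ?thesis using conjunct2[OF conjunct2[OF T]] tendsto_cong by fastforce
  qed
  ultimately show ?thesis by blast
qed

end
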